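(* Let $T$ be a DAT with duration vector $d$, and let $\mathcal{O}\in\mathcal{S}_T$ be a successful attack. Then there exists an exact time assignment $f$ with $f_{\mathrm{R}_T}\le\mathrm{t}(\mathcal{O},d)$.
   Context: A dynamic attack tree (DAT) is a finite rooted directed acyclic graph $T=(N,E)$ (edges point from a node to its children) with root $\mathrm{R}_T$, in which each node $v$ has a type $\gamma(v)\in\{\mathtt{BAS},\mathtt{OR},\mathtt{AND},\mathtt{SAND}\}$, with $\gamma(v)=\mathtt{BAS}$ if and only if $v$ is a leaf. Every node of type $\mathtt{SAND}$ comes with a fixed linear ordering $v_1,\dots,v_n$ of its children, written $v=\mathtt{SAND}(v_1,\dots,v_n)$; similarly one writes $v=\mathtt{OR}(v_1,\dots,v_n)$, $v=\mathtt{AND}(v_1,\dots,v_n)$. $N_\gamma$ denotes the set of nodes of type $\gamma$. For a node $v$, $B_v$ is the set of nodes of type $\mathtt{BAS}$ that are descendants of $v$ (reachable from $v$ by a directed path, including $v$ itself). An attack on $T$ is a pair $\mathcal{O}=(A,\prec)$ where $A\subseteq N_{\mathtt{BAS}}$ and $\prec$ is a strict partial order on $A$. An attack $(A,\prec)$ reaches a node $v$, defined recursively: if $v\in N_{\mathtt{BAS}}$, iff $v\in A$; if $v=\mathtt{OR}(v_1,\dots,v_n)$, iff it reaches some $v_i$; if $v=\mathtt{AND}(v_1,\dots,v_n)$, iff it reaches all $v_i$; if $v=\mathtt{SAND}(v_1,\dots,v_n)$, iff it reaches all $v_i$ and for every $i<n$, every $a\in A\cap B_{v_i}$ and every $a'\in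 A\cap B_{v_{i+1}}$ one has $a\prec a'$. An attack is successful if it reaches $\mathrm{R}_T$; $\mathcal{S}_T$ is the set of successful attacks. A duration vector is $d\in\mathbb{R}_{\ge0}^{N_{\mathtt{BAS}}}$. For an attack $\mathcal{O}=(A,\prec)$, $\mathrm{t}(\mathcal{O},d)=\max_C\sum_{a\in C}d_a$, the maximum over all maximal chains $C$ of $(A,\prec)$ (equal to $0$ if $A=\varnothing$). Time assignments: for a node $v$ with ordered children $v_1,\dots,v_n$ and $i<n$, let $Z^v_i=B_{v_i}\times B_{v_{i+1}}$. A time assignment is a vector $f\in[0,\infty]^N$ such that: (1) $f_a\ge d_a$ for every $a\in N_{\mathtt{BAS}}$; (2) $f_v\ge\min_i f_{v_i}$ for every $v=\mathtt{OR}(v_1,\dots,v_n)$; (3) $f_v\ge\max_i f_{v_i}$ for every $v=\mathtt{AND}(v_1,\dots,v_n)$; (4) for every $v=\mathtt{SAND}(v_1,\dots,v_n)$: (a) $f_v\ge f_{v_n}$; (b) if $f_{v_i}=\infty$ for some $i\le n$ then $f_v=\infty$; (c) if there exist $i<n$ and $(a,a')\in Z^v_i$ with $f_{a'}-d_{a'}<f_a<\infty$, then $f_v=\infty$. A time assignment is exact if equality holds in (2) and (3) for all OR- and AND-nodes, and for every SAND-node $v$ for which neither the premise of (4b) nor the premise of (4c) holds, one has $f_v=f_{v_n}$. *)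

theory Defs
  imports "HOL-Library.Extended_Real"
begin

datatype gtype = BAS | OR | AND | SAND

definition edges :: "'n set \<Rightarrow> ('n \<Rightarrow> 'n list) \<Rightarrow> ('n \<times> 'n) set" where
  "edges N ch = {(v, c). v \<in> N \<and> c \<in> set (ch v)}"

definition dat :: "'n set \<Rightarrow> ('n \<Rightarrow> 'n list) \<Rightarrow> ('n \<Rightarrow> gtype) \<Rightarrow> 'n \<Rightarrow> bool" where
  "dat N ch gam R \<longleftrightarrow>
     finite N \<and> R \<in> N \<and>
     (\<forall>v\<in>N. set (ch v) \<subseteq> N \<and> distinct (ch v)) \<and>
     (\<forall>v\<in>N. gam v = BAS \<longleftrightarrow> ch v = []) \<and>
     acyclic (edges N ch) \<and>
     (\<forall>v\<in>N. (R, v) \<in> (edges N ch)\<^sup>*)"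

definition Bdesc :: "'n set \<Rightarrow> ('n \<Rightarrow> 'n list) \<Rightarrow> ('n \<Rightarrow> gtype) \<Rightarrow> 'n \<Rightarrow> 'n set" where
  "Bdesc N ch gam v = {b. (v, b) \<in> (edges N ch)\<^sup>* \<and> gam b = BAS}"

definition strict_po_on :: "'n set \<Rightarrow> ('n \<times> 'n) set \<Rightarrow> bool" where
  "strict_po_on A P \<longleftrightarrow> P \<subseteq> A \<times> A \<and> irrefl P \<and> trans P"

definition is_attack :: "'n set \<Rightarrow> ('n \<Rightarrow> gtype) \<Rightarrow> 'n set \<Rightarrow> ('n \<times> 'n) set \<Rightarrow> bool" where
  "is_attack N gam A P \<longleftrightarrow> A \<subseteq> {a\<in>N. gam a = BAS} \<and> strict_po_on A P"

text \<open>Reachability of a node by an attack (A, P); the recursive definition of the paper,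
rendered as an inductive predicate (well-defined since the graph is a finite DAG).\<close>
inductive reaches :: "'n set \<Rightarrow> ('n \<Rightarrow> 'n list) \<Rightarrow> ('n \<Rightarrow> gtype) \<Rightarrow> 'n set \<Rightarrow> ('n \<times> 'n) set \<Rightarrow> 'n \<Rightarrow> bool"
  for N ch gam A P where
  reach_BAS: "v \<in> N \<Longrightarrow> gam v = BAS \<Longrightarrow> v \<in> A \<Longrightarrow> reaches N ch gam A P v"
| reach_OR: "v \<in> N \<Longrightarrow> gam v = OR \<Longrightarrow> c \<in> set (ch v) \<Longrightarrow> reaches N ch gam A P c
     \<Longrightarrow> reaches N ch gam A P v"
| reach_AND: "v \<in> N \<Longrightarrow> gam v = AND \<Longrightarrow> (\<forall>c\<in>set (ch v). reaches N ch gam A P c)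
     \<Longrightarrow> reaches N ch gam A P v"
| reach_SAND: "v \<in> N \<Longrightarrow> gam v = SAND \<Longrightarrow> (\<forall>c\<in>set (ch v). reaches N ch gam A P c)
     \<Longrightarrow> (\<forall>i. Suc i < length (ch v) \<longrightarrow>
            (\<forall>a\<in>A \<inter> Bdesc N ch gam (ch v ! i). \<forall>a'\<in>A \<inter> Bdesc N ch gam (ch v ! Suc i). (a, a') \<in> P))
     \<Longrightarrow> reaches N ch gam A P v"

definition successful :: "'n set \<Rightarrow> ('n \<Rightarrow> 'n list) \<Rightarrow> ('n \<Rightarrow> gtype) \<Rightarrow> 'n \<Rightarrow> 'n set \<Rightarrow> ('n \<times> 'n) set \<Rightarrow> bool" where
  "successful N ch gam R A P \<longleftrightarrow> is_attack N gam A P \<and> reaches N ch gam A P R"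

definition is_chain :: "'n set \<Rightarrow> ('n \<times> 'n) set \<Rightarrow> 'n set \<Rightarrow> bool" where
  "is_chain A P C \<longleftrightarrow> C \<subseteq> A \<and> (\<forall>x\<in>C. \<forall>y\<in>C. x \<noteq> y \<longrightarrow> (x, y) \<in> P \<or> (y, x) \<in> P)"

definition is_max_chain :: "'n set \<Rightarrow> ('n \<times> 'n) set \<Rightarrow> 'n set \<Rightarrow> bool" where
  "is_max_chain A P C \<longleftrightarrow> is_chain A P C \<and> (\<forall>C'. is_chain A P C' \<and> C \<subseteq> C' \<longrightarrow> C' = C)"

text \<open>Attack duration t(O,d); for A empty the only maximal chain is the empty one, giving 0.\<close>
definition attack_time :: "'n set \<Rightarrow> ('n \<times> 'n) set \<Rightarrow> ('n \<Rightarrow> real) \<Rightarrow> real" where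
  "attack_time A P d = (if A = {} then 0 else Max {sum d C | C. is_max_chain A P C})"

definition is_duration :: "'n set \<Rightarrow> ('n \<Rightarrow> gtype) \<Rightarrow> ('n \<Rightarrow> real) \<Rightarrow> bool" where
  "is_duration N gam d \<longleftrightarrow> (\<forall>a\<in>N. gam a = BAS \<longrightarrow> 0 \<le> d a)"

text \<open>Premises of conditions (4b) and (4c) at a SAND node v.\<close>
definition sand_inf_child :: "('n \<Rightarrow> 'n list) \<Rightarrow> ('n \<Rightarrow> ereal) \<Rightarrow> 'n \<Rightarrow> bool" where
  "sand_inf_child ch f v \<longleftrightarrow> (\<exists>c\<in>set (ch v). f c = \<infinity>)"

definition sand_violation :: "'n set \<Rightarrow> ('n \<Rightarrow> 'n list) \<Rightarrow> ('n \<Rightarrow> gtype) \<Rightarrow> ('n \<Rightarrow> real)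
    \<Rightarrow> ('n \<Rightarrow> ereal) \<Rightarrow> 'n \<Rightarrow> bool" where
  "sand_violation N ch gam d f v \<longleftrightarrow>
     (\<exists>i. Suc i < length (ch v) \<and>
        (\<exists>a\<in>Bdesc N ch gam (ch v ! i). \<exists>a'\<in>Bdesc N ch gam (ch v ! Suc i).
            f a' - ereal (d a') < f a \<and> f a < \<infinity>))"

text \<open>Time assignment: f in [0,\<infinity>]^N (values outside N are irrelevant).\<close>
definition time_assignment :: "'n set \<Rightarrow> ('n \<Rightarrow> 'n list) \<Rightarrow> ('n \<Rightarrow> gtype) \<Rightarrow> ('n \<Rightarrow> real)
    \<Rightarrow> ('n \<Rightarrow> ereal) \<Rightarrow> bool" where
  "time_assignment N ch gam d f \<longleftrightarrow>
     (\<forall>v\<in>N. 0 \<le> f v) \<and>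
     (\<forall>a\<in>N. gam a = BAS \<longrightarrow> ereal (d a) \<le> f a) \<and>
     (\<forall>v\<in>N. gam v = OR \<longrightarrow> Min (f ` set (ch v)) \<le> f v) \<and>
     (\<forall>v\<in>N. gam v = AND \<longrightarrow> Max (f ` set (ch v)) \<le> f v) \<and>
     (\<forall>v\<in>N. gam v = SAND \<longrightarrow>
        f (last (ch v)) \<le> f v \<and>
        (sand_inf_child ch f v \<longrightarrow> f v = \<infinity>) \<and>
        (sand_violation N ch gam d f v \<longrightarrow> f v = \<infinity>))"

definition exact_time_assignment :: "'n set \<Rightarrow> ('n \<Rightarrow> 'n list) \<Rightarrow> ('n \<Rightarrow> gtype) \<Rightarrow> ('n \<Rightarrow> real)
    \<Rightarrow> ('n \<Rightarrow> ereal) \<Rightarrow> bool" where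
  "exact_time_assignment N ch gam d f \<longleftrightarrow>
     time_assignment N ch gam d f \<and>
     (\<forall>v\<in>N. gam v = OR \<longrightarrow> f v = Min (f ` set (ch v))) \<and>
     (\<forall>v\<in>N. gam v = AND \<longrightarrow> f v = Max (f ` set (ch v))) \<and>
     (\<forall>v\<in>N. gam v = SAND \<longrightarrow> \<not> sand_inf_child ch f v \<longrightarrow> \<not> sand_violation N ch gam d f v
        \<longrightarrow> f v = f (last (ch v)))"

end

theory Submission
  imports Defs
begin

definition lc :: "'n set \<Rightarrow> ('n \<times> 'n) set \<Rightarrow> ('n \<Rightarrow> real) \<Rightarrow> 'n \<Rightarrow> real" where
  "lc A P d a = Max {sum d C | C. is_chain A P C \<and> a \<in> C \<and> (\<forall>x\<in>C. x \<noteq> a \<longrightarrow> (x,a)\<in>P)}"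

lemma lc_fin:
  assumes "finite A"
  shows "finite {sum d C | C. is_chain A P C \<and> a \<in> C \<and> (\<forall>x\<in>C. x \<noteq> a \<longrightarrow> (x,a)\<in>P)}"
proof -
  have "{sum d C | C. is_chain A P C \<and> a \<in> C \<and> (\<forall>x\<in>C. x \<noteq> a \<longrightarrow> (x,a)\<in>P)} \<subseteq> sum d ` Pow A"
    unfolding is_chain_def by auto
  thus ?thesis using assms finite_subset by blast
qed

lemma lc_ge:
  assumes "finite A" "is_chain A P C" "a \<in> C" "\<forall>x\<in>C. x \<noteq> a \<longrightarrow> (x,a)\<in>P"
  shows "sum d C \<le> lc A P d a"
  unfolding lc_def using assms lc_fin[OF assms(1)] by (intro Max_ge) auto

lemma lc_d:
  assumes "finite A" "a \<in> A"
  shows "d a \<le> lc A P d a"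
  using lc_ge[OF assms(1), of P "{a}" a d] assms by (auto simp: is_chain_def)

lemma lc_step:
  assumes "finite A" "strict_po_on A P" "a \<in> A" "(a,a') \<in> P"
  shows "lc A P d a + d a' \<le> lc A P d a'"
proof -
  let ?S = "{sum d C | C. is_chain A P C \<and> a \<in> C \<and> (\<forall>x\<in>C. x \<noteq> a \<longrightarrow> (x,a)\<in>P)}"
  have "?S \<noteq> {}" using assms(3) by (auto simp: is_chain_def)
  then have "lc A P d a \<in> ?S" unfolding lc_def using lc_fin[OF assms(1)] Max_in by blast
  then obtain C where C: "is_chain A P C" "a \<in> C" "\<forall>x\<in>C. x \<noteq> a \<longrightarrow> (x,a)\<in>P"
    and eq: "lc A P d a = sum d C" by auto
  have tr: "trans P" and irr: "irrefl P" and sub: "P \<subseteq> A \<times> A"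
    using assms(2) by (auto simp: strict_po_on_def)
  have a'A: "a' \<in> A" using sub assms(4) by auto
  have below: "\<forall>x\<in>C. (x,a') \<in> P"
  proof
    fix x assume "x \<in> C"
    show "(x,a') \<in> P"
    proof (cases "x = a")
      case True then show ?thesis using assms(4) by simp
    next
      case False then have "(x,a) \<in> P" using C(3) \<open>x \<in> C\<close> by blast
      then show ?thesis using assms(4) tr by (meson transD)
    qed
  qed
  have notin: "a' \<notin> C" using below irr by (auto simp: irrefl_def)
  have finC: "finite C" using C(1) assms(1) finite_subset by (auto simp: is_chain_def)
  have ch2: "is_chain A P (insert a' C)"
    using C(1) below a'A by (auto simp: is_chain_def)
  have "sum d (insert a' C) \<le> lc A P d a'"
    by (rule lc_ge[OF assms(1) ch2]) (use below in auto)
  moreover have "sum d (insert a' C) = d a' + sum d C" using finC notin by simp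
  ultimately show ?thesis using eq by simp
qed

lemma exists_max_chain:
  assumes "finite A" "is_chain A P C"
  shows "\<exists>C'. is_max_chain A P C' \<and> C \<subseteq> C'"
proof -
  let ?S = "{C'. is_chain A P C' \<and> C \<subseteq> C'}"
  have "?S \<subseteq> Pow A" by (auto simp: is_chain_def)
  then have finS: "finite ?S" using assms(1) finite_subset by blast
  have "C \<in> ?S" using assms(2) by auto
  then have ne: "card ` ?S \<noteq> {}" by blast
  have "Max (card ` ?S) \<in> card ` ?S" using finS ne by (intro Max_in) auto
  then obtain C' where C': "C' \<in> ?S" "card C' = Max (card ` ?S)" by auto
  have "is_max_chain A P C'"
    unfolding is_max_chain_def
  proof (intro conjI allI impI)
    show "is_chain A P C'" using C' by auto
    fix C'' assume h: "is_chain A P C'' \<and> C' \<subseteq> C''"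
    then have "C'' \<in> ?S" using C' by auto
    then have "card C'' \<le> card C'" using C'(2) finS by auto
    moreover have "finite C''" using h assms(1) finite_subset by (auto simp: is_chain_def)
    ultimately show "C'' = C'" using h card_subset_eq by (metis antisym card_mono)
  qed
  then show ?thesis using C' by auto
qed

lemma lc_le_time:
  assumes "finite A" "a \<in> A" "\<forall>x\<in>A. 0 \<le> d x"
  shows "lc A P d a \<le> attack_time A P d"
proof -
  let ?S = "{sum d C | C. is_chain A P C \<and> a \<in> C \<and> (\<forall>x\<in>C. x \<noteq> a \<longrightarrow> (x,a)\<in>P)}"
  have "?S \<noteq> {}" using assms(2) by (auto simp: is_chain_def)
  then have "lc A P d a \<in> ?S" unfolding lc_def using lc_fin[OF assms(1)] Max_in by blast
  then obtain C where C: "is_chain A P C" and eq: "lc A P d a = sum d C" by auto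
  obtain C' where C': "is_max_chain A P C'" "C \<subseteq> C'" using exists_max_chain[OF assms(1) C] by blast
  have finC': "finite C'" using C' assms(1) finite_subset by (auto simp: is_max_chain_def is_chain_def)
  have "sum d C \<le> sum d C'"
    using C' finC' assms(3) by (intro sum_mono2) (auto simp: is_max_chain_def is_chain_def)
  moreover have "sum d C' \<le> Max {sum d C | C. is_max_chain A P C}"
  proof (rule Max_ge)
    have "{sum d C | C. is_max_chain A P C} \<subseteq> sum d ` Pow A"
      by (auto simp: is_max_chain_def is_chain_def)
    then show "finite {sum d C | C. is_max_chain A P C}" using assms(1) finite_subset by blast
    show "sum d C' \<in> {sum d C | C. is_max_chain A P C}" using C' by auto
  qed
  ultimately show ?thesis using eq assms(2) by (auto simp: attack_time_def)
qed

theorem mainTheorem7: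
  fixes N :: "'n set" and ch :: "'n \<Rightarrow> 'n list" and gam :: "'n \<Rightarrow> gtype" and R :: 'n
    and d :: "'n \<Rightarrow> real" and A :: "'n set" and P :: "('n \<times> 'n) set"
  assumes "dat N ch gam R"
    and "is_duration N gam d"
    and "successful N ch gam R A P"
  shows "\<exists>f. exact_time_assignment N ch gam d f \<and> f R \<le> ereal (attack_time A P d)"
proof -
  have finN: "finite N" and RN: "R \<in> N" and chN: "\<And>v. v \<in> N \<Longrightarrow> set (ch v) \<subseteq> N"
    and basch: "\<And>v. v \<in> N \<Longrightarrow> gam v = BAS \<longleftrightarrow> ch v = []"
    and acy: "acyclic (edges N ch)"
    using assms(1) unfolding dat_def by auto
  have AN: "A \<subseteq> N" and Abas: "\<And>a. a \<in> A \<Longrightarrow> gam a = BAS" and po: "strict_po_on A P"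
    using assms(3) unfolding successful_def is_attack_def by auto
  have reachR: "reaches N ch gam A P R" using assms(3) unfolding successful_def by auto
  have finA: "finite A" using AN finN finite_subset by blast
  have dA: "\<forall>x\<in>A. 0 \<le> d x" using assms(2) AN Abas unfolding is_duration_def by auto
  define E where "E = edges N ch"
  have "E \<subseteq> N \<times> (\<Union>v\<in>N. set (ch v))" unfolding E_def edges_def by auto
  moreover have "finite (N \<times> (\<Union>v\<in>N. set (ch v)))" using finN by auto
  ultimately have finE: "finite E" by (rule finite_subset)
  have wfR: "wf (E\<inverse>)" using finE acy unfolding E_def by (rule finite_acyclic_wf_converse)
  define fb where "fb = (\<lambda>a. if a \<in> A then ereal (lc A P d a) else \<infinity>)"
  define vio where "vio = sand_violation N ch gam d fb"
  define F where "F = (\<lambda>(g::'n \<Rightarrow> ereal) v. if v \<in> N then (case gam v of BAS \<Rightarrow> fb v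
      | OR \<Rightarrow> Min (g ` set (ch v)) | AND \<Rightarrow> Max (g ` set (ch v))
      | SAND \<Rightarrow> (if (\<exists>c\<in>set (ch v). g c = \<infinity>) \<or> vio v then \<infinity> else g (last (ch v)))) else 0)"
  define f where "f = wfrec (E\<inverse>) F"
  have feq: "f v = F f v" if vN: "v \<in> N" for v
  proof -
    have "f v = F (cut f (E\<inverse>) v) v" unfolding f_def by (rule wfrec[OF wfR])
    moreover have cc: "\<forall>c\<in>set (ch v). cut f (E\<inverse>) v c = f c"
      using vN by (simp add: cut_apply E_def edges_def)
    then have im: "cut f (E\<inverse>) v ` set (ch v) = f ` set (ch v)" by (auto simp: image_def)
    have "F (cut f (E\<inverse>) v) v = F f v"
    proof (cases "gam v")
      case SAND
      then have "ch v \<noteq> []" using basch[OF vN] by auto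
      then have "last (ch v) \<in> set (ch v)" by simp
      then show ?thesis using SAND cc unfolding F_def by auto
    qed (auto simp: F_def im)
    ultimately show ?thesis by simp
  qed
  have fBAS: "f v = fb v" if "v \<in> N" "gam v = BAS" for v
    using feq[OF that(1)] that by (simp add: F_def)
  have fOR: "f v = Min (f ` set (ch v))" if "v \<in> N" "gam v = OR" for v
    using feq[OF that(1)] that by (simp add: F_def)
  have fAND: "f v = Max (f ` set (ch v))" if "v \<in> N" "gam v = AND" for v
    using feq[OF that(1)] that by (simp add: F_def)
  have fSAND: "f v = (if (\<exists>c\<in>set (ch v). f c = \<infinity>) \<or> vio v then \<infinity> else f (last (ch v)))"
    if "v \<in> N" "gam v = SAND" for v
    using feq[OF that(1)] that by (simp add: F_def)
  have rtN: "y \<in> N" if "(x,y) \<in> (edges N ch)\<^sup>*" "x \<in> N" for x y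
    using that by (induction rule: rtrancl_induct) (auto simp: edges_def dest: chN)
  have Bd: "b \<in> N \<and> gam b = BAS" if "b \<in> Bdesc N ch gam v" "v \<in> N" for b v
    using that rtN unfolding Bdesc_def by auto
  have fB: "f b = fb b" if "b \<in> Bdesc N ch gam v" "v \<in> N" for b v
    using Bd[OF that] fBAS by auto
  have vio_eq: "sand_violation N ch gam d f v \<longleftrightarrow> vio v" if vN: "v \<in> N" for v
  proof -
    have "\<And>i. i < length (ch v) \<Longrightarrow> ch v ! i \<in> N" using chN[OF vN] nth_mem by blast
    then have "\<And>i a. i < length (ch v) \<Longrightarrow> a \<in> Bdesc N ch gam (ch v ! i) \<Longrightarrow> f a = fb a"
      using fB by blast
    then show ?thesis unfolding vio_def sand_violation_def
      by (metis Suc_lessD)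
  qed
  have claim: "v \<in> N \<longrightarrow> f v = \<infinity> \<or> (\<exists>a\<in>A. f v = ereal (lc A P d a))" for v
    using wfR
  proof (induction v rule: wf_induct_rule)
    case (less v)
    show ?case
    proof
      assume vN: "v \<in> N"
      have IH: "\<And>c. c \<in> set (ch v) \<Longrightarrow> f c = \<infinity> \<or> (\<exists>a\<in>A. f c = ereal (lc A P d a))"
        using less vN chN unfolding E_def edges_def by blast
      show "f v = \<infinity> \<or> (\<exists>a\<in>A. f v = ereal (lc A P d a))"
      proof (cases "gam v")
        case BAS then show ?thesis using fBAS[OF vN] by (auto simp: fb_def)
      next
        case OR
        then have "ch v \<noteq> []" using basch[OF vN] by auto
        then have "Min (f ` set (ch v)) \<in> f ` set (ch v)" by (intro Min_in) auto
        then obtain c where "c \<in> set (ch v)" "f v = f c" using fOR[OF vN OR] by auto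
        then show ?thesis using IH[of c] by auto
      next
        case AND
        then have "ch v \<noteq> []" using basch[OF vN] by auto
        then have "Max (f ` set (ch v)) \<in> f ` set (ch v)" by (intro Max_in) auto
        then obtain c where "c \<in> set (ch v)" "f v = f c" using fAND[OF vN AND] by auto
        then show ?thesis using IH[of c] by auto
      next
        case SAND
        then have "ch v \<noteq> []" using basch[OF vN] by auto
        then have "last (ch v) \<in> set (ch v)" by simp
        then show ?thesis using fSAND[OF vN SAND] IH by auto
      qed
    qed
  qed
  have nonvio: "\<not> vio v" if "v \<in> N" "gam v = SAND"
    "\<forall>i. Suc i < length (ch v) \<longrightarrow>
            (\<forall>a\<in>A \<inter> Bdesc N ch gam (ch v ! i). \<forall>a'\<in>A \<inter> Bdesc N ch gam (ch v ! Suc i). (a, a') \<in> P)"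
    for v
  proof
    assume "vio v"
    then obtain i a a' where i: "Suc i < length (ch v)" and a: "a \<in> Bdesc N ch gam (ch v ! i)"
      and a': "a' \<in> Bdesc N ch gam (ch v ! Suc i)" and lt: "fb a' - ereal (d a') < fb a" "fb a < \<infinity>"
      unfolding vio_def sand_violation_def by blast
    have aA: "a \<in> A" using lt(2) by (auto simp: fb_def split: if_splits)
    show False
    proof (cases "a' \<in> A")
      case False then show False using lt by (simp add: fb_def)
    next
      case True
      then have "(a,a') \<in> P" using that(3) i a a' aA by blast
      then have "lc A P d a + d a' \<le> lc A P d a'" using lc_step[OF finA po aA] by blast
      then show False using lt aA True by (simp add: fb_def)
    qed
  qed
  have fin: "f v \<noteq> \<infinity>" if "reaches N ch gam A P v" for v
    using that
  proof (induction rule: reaches.induct)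
    case (reach_BAS v) then show ?case using fBAS by (simp add: fb_def)
  next
    case (reach_OR v c)
    have "Min (f ` set (ch v)) \<le> f c" using reach_OR by (intro Min_le) auto
    then show ?case using fOR[OF reach_OR(1,2)] reach_OR(5) by auto
  next
    case (reach_AND v)
    then have "ch v \<noteq> []" using basch[OF reach_AND(1)] reach_AND(2) by auto
    then have "Max (f ` set (ch v)) \<in> f ` set (ch v)" by (intro Max_in) auto
    then show ?case using fAND[OF reach_AND(1,2)] reach_AND.IH by auto
  next
    case (reach_SAND v)
    then have "ch v \<noteq> []" using basch[OF reach_SAND(1)] reach_SAND(2) by auto
    then have "last (ch v) \<in> set (ch v)" by simp
    moreover have "\<not> vio v" using nonvio reach_SAND by blast
    ultimately show ?case using fSAND[OF reach_SAND(1,2)] reach_SAND.IH by auto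
  qed
  have nonneg: "0 \<le> f v" if "v \<in> N" for v
    using claim[of v] that lc_d[OF finA, of _ d P] dA by force
  have exact: "exact_time_assignment N ch gam d f"
    unfolding exact_time_assignment_def time_assignment_def
  proof (intro conjI ballI impI)
    fix v assume "v \<in> N" then show "0 \<le> f v" by (rule nonneg)
  next
    fix a assume "a \<in> N" "gam a = BAS"
    then show "ereal (d a) \<le> f a" using fBAS lc_d[OF finA, of a d P] by (auto simp: fb_def)
  next
    fix v assume "v \<in> N" "gam v = OR" then show "Min (f ` set (ch v)) \<le> f v" using fOR by simp
  next
    fix v assume "v \<in> N" "gam v = AND" then show "Max (f ` set (ch v)) \<le> f v" using fAND by simp
  next
    fix v assume "v \<in> N" "gam v = OR" then show "f v = Min (f ` set (ch v))" using fOR by simp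
  next
    fix v assume "v \<in> N" "gam v = AND" then show "f v = Max (f ` set (ch v))" using fAND by simp
  next
    fix v assume "v \<in> N" "gam v = SAND" then show "f (last (ch v)) \<le> f v" using fSAND[of v] by auto
  next
    fix v assume "v \<in> N" "gam v = SAND" "sand_inf_child ch f v"
    then show "f v = \<infinity>" using fSAND[of v] by (auto simp: sand_inf_child_def)
  next
    fix v assume "v \<in> N" "gam v = SAND" "sand_violation N ch gam d f v"
    then show "f v = \<infinity>" using fSAND[of v] vio_eq by auto
  next
    fix v assume "v \<in> N" "gam v = SAND" "\<not> sand_inf_child ch f v" "\<not> sand_violation N ch gam d f v"
    then show "f v = f (last (ch v))" using fSAND[of v] vio_eq by (auto simp: sand_inf_child_def)
  qed
  have "f R \<noteq> \<infinity>" using fin reachR by blast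
  then obtain a where "a \<in> A" "f R = ereal (lc A P d a)" using claim[of R] RN by blast
  then have "f R \<le> ereal (attack_time A P d)" using lc_le_time[OF finA _ dA, of a P] by simp
  then show ?thesis using exact by blast
qed

end
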